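(* Let $\ell^\infty\neq0$ be a complex constant. For $k\in\{1,2\}$ let $\Sigma^{(k)}$ be finite disjoint index sets, and for $\alpha\in\Sigma^{(k)}$ let $m_\alpha\ge1$, $z_\alpha\in\mathbb C$ (pairwise distinct within each $\Sigma^{(k)}$), and $\ell^\alpha_{[p]}\in\mathbb C$ ($0\le p\le m_\alpha-1$) with $\ell^\alpha_{[m_\alpha-1]}\neq0$. Let $\chi_k(z)=\sum_{\alpha\in\Sigma^{(k)}}\sum_{p=0}^{m_\alpha-1}\frac{\ell^\alpha_{[p]}}{(z-z_\alpha)^{p+1}}$, $\varphi_k=\chi_k-\ell^\infty$, $M_k=\sum_{\alpha\in\Sigma^{(k)}}m_\alpha$, $M=M_1+M_2$, and assume the zeros $\zeta^{(1)}_i$ ($1\le i\le M_1$) of $\varphi_1$ and $\zeta^{(2)}_i$ ($M_1<i\le M$) of $\varphi_2$ are simple. For $\gamma\neq0$ let $\varphi_{1\otimes2,\gamma}(z)=\chi_1(z)+\chi_2(z-\gamma^{-1})-\ell^\infty$, and for $\gamma$ small let $\zeta_i(\gamma)$ be its zeros labelled so that $\zeta_i(\gamma)=\zeta^{(1)}_i+O(\gamma)$ for $i\le M_1$ and $\zeta_i(\gamma)=\gamma^{-1}+\zeta^{(2)}_i+O(\gamma)$ for $i>M_1$. Then for each $i\in\{1,\dots,M\}$, $\varphi_{1\otimes2,\gamma}'(\zeta_i(\gamma))=\varphi_k'(\zeta^{(k)}_i)+O(\gamma)$, with $k=1$ if $i\le M_1$ and $k=2$ if $i>M_1$. *)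

theory Defs
  imports "HOL-Analysis.Analysis" "HOL-Library.Landau_Symbols"
begin

text \<open>The rational function chi_k(w) = sum over alpha in S, p < m alpha of
  l alpha p / (w - z alpha)^(p+1).  Only meaningful away from the poles z ` S.\<close>
definition chi :: "'a set \<Rightarrow> ('a \<Rightarrow> nat) \<Rightarrow> ('a \<Rightarrow> complex) \<Rightarrow> ('a \<Rightarrow> nat \<Rightarrow> complex)
                   \<Rightarrow> complex \<Rightarrow> complex" where
  "chi S m z l w = (\<Sum>\<alpha>\<in>S. \<Sum>p<m \<alpha>. l \<alpha> p / (w - z \<alpha>) ^ (p + 1))"

definition phi :: "'a set \<Rightarrow> ('a \<Rightarrow> nat) \<Rightarrow> ('a \<Rightarrow> complex) \<Rightarrow> ('a \<Rightarrow> nat \<Rightarrow> complex)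
                   \<Rightarrow> complex \<Rightarrow> complex \<Rightarrow> complex" where
  "phi S m z l linf w = chi S m z l w - linf"

definition phi12 :: "'a set \<Rightarrow> 'a set \<Rightarrow> ('a \<Rightarrow> nat) \<Rightarrow> ('a \<Rightarrow> complex) \<Rightarrow> ('a \<Rightarrow> nat \<Rightarrow> complex)
                   \<Rightarrow> complex \<Rightarrow> complex \<Rightarrow> complex \<Rightarrow> complex" where
  "phi12 S1 S2 m z l linf \<gamma> w = chi S1 m z l w + chi S2 m z l (w - inverse \<gamma>) - linf"

definition poles12 :: "'a set \<Rightarrow> 'a set \<Rightarrow> ('a \<Rightarrow> complex) \<Rightarrow> complex \<Rightarrow> complex set" where
  "poles12 S1 S2 z \<gamma> = z ` S1 \<union> (\<lambda>\<alpha>. z \<alpha> + inverse \<gamma>) ` S2"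

end

theory Submission imports Defs begin

definition chid :: "'a set \<Rightarrow> ('a \<Rightarrow> nat) \<Rightarrow> ('a \<Rightarrow> complex) \<Rightarrow> ('a \<Rightarrow> nat \<Rightarrow> complex)
                   \<Rightarrow> complex \<Rightarrow> complex" where
  "chid S m z l w = (\<Sum>\<alpha>\<in>S. \<Sum>p<m \<alpha>. - (of_nat (p+1) * l \<alpha> p) / (w - z \<alpha>) ^ (p + 2))"

lemma term_deriv:
  fixes a c w :: complex
  assumes "w \<noteq> a"
  shows "((\<lambda>w. c / (w - a) ^ (p + 1)) has_field_derivative
           - (of_nat (p+1) * c) / (w - a) ^ (p + 2)) (at w)"
proof -
  have d1: "((\<lambda>w. (w-a)^(p+1)) has_field_derivative of_nat (p+1) * (w-a)^p) (at w)"
    by (rule derivative_eq_intros refl | simp)+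
  have nz: "(w-a)^(p+1) \<noteq> 0" using assms by simp
  note d2 = DERIV_cmult[OF DERIV_inverse_fun[OF d1 nz], of c]
  show ?thesis
    apply (rule DERIV_cong[OF d2[unfolded divide_inverse[symmetric]]])
    using assms by (simp add: divide_simps power_Suc2 power_add; simp add: algebra_simps power_Suc power_add)
qed

lemma chi_deriv:
  assumes "finite S" "w \<notin> z ` S"
  shows "(chi S m z l has_field_derivative chid S m z l w) (at w)"
proof -
  have "((\<lambda>w. \<Sum>\<alpha>\<in>S. \<Sum>p<m \<alpha>. l \<alpha> p / (w - z \<alpha>) ^ (p + 1)) has_field_derivative
        (\<Sum>\<alpha>\<in>S. \<Sum>p<m \<alpha>. - (of_nat (p+1) * l \<alpha> p) / (w - z \<alpha>) ^ (p + 2))) (at w)"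
    apply (intro DERIV_sum term_deriv)
    using assms by auto
  then show ?thesis unfolding chi_def chid_def by (simp add: fun_eq_iff)
qed

lemma deriv_phi:
  assumes "finite S" "w \<notin> z ` S"
  shows "deriv (phi S m z l linf) w = chid S m z l w"
proof -
  have "phi S m z l linf = (\<lambda>w. chi S m z l w - linf)" by (simp add: fun_eq_iff phi_def)
  moreover have "((\<lambda>w. chi S m z l w - linf) has_field_derivative chid S m z l w) (at w)"
    using chi_deriv[OF assms] by (auto intro!: derivative_eq_intros)
  ultimately show ?thesis by (simp add: DERIV_imp_deriv)
qed

lemma deriv_phi12:
  assumes "finite S1" "finite S2" "w \<notin> z ` S1" "w - inverse g \<notin> z ` S2"
  shows "deriv (phi12 S1 S2 m z l linf g) w = chid S1 m z l w + chid S2 m z l (w - inverse g)"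
proof -
  have "phi12 S1 S2 m z l linf g = (\<lambda>w. chi S1 m z l w + chi S2 m z l (w - inverse g) - linf)"
    by (simp add: fun_eq_iff phi12_def)
  moreover have "((\<lambda>w. chi S1 m z l w + chi S2 m z l (w - inverse g) - linf) has_field_derivative
        chid S1 m z l w + chid S2 m z l (w - inverse g)) (at w)"
  proof -
    have "((\<lambda>w. chi S2 m z l (w - inverse g)) has_field_derivative chid S2 m z l (w - inverse g) * 1) (at w)"
      by (rule DERIV_chain2[where f="chi S2 m z l" and g="\<lambda>w. w - inverse g"])
         (use chi_deriv[OF assms(2,4)] in \<open>auto intro!: derivative_eq_intros\<close>)
    then show ?thesis
      using chi_deriv[OF assms(1,3), of m l] by (auto intro!: derivative_eq_intros)
  qed
  ultimately show ?thesis by (simp add: DERIV_imp_deriv)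
qed

lemma chid_holo: "finite S \<Longrightarrow> chid S m z l holomorphic_on (- z ` S)"
  unfolding chid_def by (intro holomorphic_intros) auto

lemma bigo_tendsto0:
  fixes f :: "complex \<Rightarrow> complex"
  assumes "f \<in> O[at 0](\<lambda>x. x)"
  shows "(f \<longlongrightarrow> 0) (at 0)"
proof -
  obtain c where c: "eventually (\<lambda>x. norm (f x) \<le> c * norm x) (at 0)"
    using landau_o.bigE[OF assms] by blast
  have n0: "((\<lambda>x::complex. norm x) \<longlongrightarrow> 0) (at 0)"
    using tendsto_norm_zero[OF tendsto_ident_at[of "0::complex" UNIV]] by simp
  have "((\<lambda>x::complex. c * norm x) \<longlongrightarrow> c * norm (0::complex)) (at 0)"
    using tendsto_mult[OF tendsto_const[of c] n0] by simp
  then show ?thesis using Lim_null_comparison[OF c] by simp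
qed

lemma ev_nz: "eventually (\<lambda>x::complex. x \<noteq> 0) (at 0)"
  by (simp add: eventually_at_filter)

lemma near_bound:
  fixes g :: "complex \<Rightarrow> complex"
  assumes fS: "finite S" and w0: "w0 \<notin> z ` S" and gO: "(\<lambda>\<gamma>. g \<gamma> - w0) \<in> O[at 0](\<lambda>\<gamma>. \<gamma>)"
  shows "eventually (\<lambda>\<gamma>. g \<gamma> \<notin> z ` S) (at 0)"
    and "(\<lambda>\<gamma>. chid S m z l (g \<gamma>) - chid S m z l w0) \<in> O[at 0](\<lambda>\<gamma>. \<gamma>)"
proof -
  have "((\<lambda>\<gamma>. g \<gamma> - w0) \<longlongrightarrow> 0) (at 0)" by (rule bigo_tendsto0[OF gO])
  from tendsto_add[OF this tendsto_const[of w0]]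
  have gt: "(g \<longlongrightarrow> w0) (at 0)" by simp
  have op: "open (- z ` S)" using fS by (simp add: open_Compl finite_imp_closed)
  show "eventually (\<lambda>\<gamma>. g \<gamma> \<notin> z ` S) (at 0)"
    using topological_tendstoD[OF gt op] w0 by simp
  have "chid S m z l field_differentiable (at w0)"
    using holomorphic_on_imp_differentiable_at[OF chid_holo[OF fS] op] w0 by simp
  then obtain D where "(chid S m z l has_field_derivative D) (at w0)"
    unfolding field_differentiable_def by blast
  then obtain q where q: "\<And>w. chid S m z l w - chid S m z l w0 = q w * (w - w0)" "isCont q w0"
    unfolding CARAT_DERIV by blast
  have "((\<lambda>\<gamma>. q (g \<gamma>) / 1) \<longlongrightarrow> q w0) (at 0)"
    using isCont_tendsto_compose[OF q(2) gt] by simp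
  then have "(\<lambda>\<gamma>. q (g \<gamma>)) \<in> O[at 0](\<lambda>_. 1)"
    by (rule bigoI_tendsto) simp
  from landau_o.big_mult[OF this gO]
  show "(\<lambda>\<gamma>. chid S m z l (g \<gamma>) - chid S m z l w0) \<in> O[at 0](\<lambda>\<gamma>. \<gamma>)"
    by (simp add: q(1))
qed

lemma term_ident:
  fixes k x g :: complex
  assumes "g \<noteq> 0"
  shows "k / x ^ (p + 2) / g = k * g ^ (p + 1) / (g * x) ^ (p + 2)"
proof (cases "x = 0")
  case True then show ?thesis by simp
next
  case False then show ?thesis using assms
    by (simp add: power_mult_distrib field_simps power_add)
qed

lemma far_bound:
  fixes w :: "complex \<Rightarrow> complex"
  assumes fS: "finite S" and lim: "((\<lambda>\<gamma>. \<gamma> * w \<gamma>) \<longlongrightarrow> c) (at 0)" and c: "c \<noteq> 0"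
  shows "eventually (\<lambda>\<gamma>. w \<gamma> \<notin> z ` S) (at 0)"
    and "(\<lambda>\<gamma>. chid S m z l (w \<gamma>)) \<in> O[at 0](\<lambda>\<gamma>. \<gamma>)"
proof -
  have la: "((\<lambda>\<gamma>. \<gamma> * (w \<gamma> - a)) \<longlongrightarrow> c) (at 0)" for a
  proof -
    have "((\<lambda>\<gamma>. \<gamma> * w \<gamma> - \<gamma> * a) \<longlongrightarrow> c - 0 * a) (at 0)"
      by (intro tendsto_intros lim)
    then show ?thesis by (simp add: algebra_simps)
  qed
  have "\<forall>a\<in>z ` S. eventually (\<lambda>\<gamma>. w \<gamma> \<noteq> a) (at 0)"
  proof
    fix a
    show "eventually (\<lambda>\<gamma>. w \<gamma> \<noteq> a) (at 0)"
      using tendsto_imp_eventually_ne[OF la[of a] c] by (rule eventually_mono) auto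
  qed
  from eventually_ball_finite[OF finite_imageI[OF fS] this]
  show "eventually (\<lambda>\<gamma>. w \<gamma> \<notin> z ` S) (at 0)" by (rule eventually_mono) blast
  have t: "((\<lambda>\<gamma>. \<Sum>\<alpha>\<in>S. \<Sum>p<m \<alpha>. - (of_nat (p+1) * l \<alpha> p) * \<gamma> ^ (p + 1) / (\<gamma> * (w \<gamma> - z \<alpha>)) ^ (p + 2))
      \<longlongrightarrow> (\<Sum>\<alpha>\<in>S. \<Sum>p<m \<alpha>. - (of_nat (p+1) * l \<alpha> p) * 0 ^ (p + 1) / c ^ (p + 2))) (at 0)"
    by (intro tendsto_sum tendsto_divide tendsto_mult tendsto_power tendsto_const tendsto_ident_at la)
       (use c in auto)
  have e: "eventually (\<lambda>\<gamma>. (\<Sum>\<alpha>\<in>S. \<Sum>p<m \<alpha>. - (of_nat (p+1) * l \<alpha> p) * \<gamma> ^ (p + 1) / (\<gamma> * (w \<gamma> - z \<alpha>)) ^ (p + 2))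
       = chid S m z l (w \<gamma>) / \<gamma>) (at 0)"
    using ev_nz
  proof (rule eventually_mono)
    fix \<gamma> :: complex assume "\<gamma> \<noteq> 0"
    then show "(\<Sum>\<alpha>\<in>S. \<Sum>p<m \<alpha>. - (of_nat (p+1) * l \<alpha> p) * \<gamma> ^ (p + 1) / (\<gamma> * (w \<gamma> - z \<alpha>)) ^ (p + 2))
       = chid S m z l (w \<gamma>) / \<gamma>"
      unfolding chid_def sum_divide_distrib by (intro sum.cong refl) (rule term_ident[symmetric])
  qed
  have "((\<lambda>\<gamma>. chid S m z l (w \<gamma>) / \<gamma>) \<longlongrightarrow> 0) (at 0)"
    using tendsto_cong[OF e] t by simp
  then show "(\<lambda>\<gamma>. chid S m z l (w \<gamma>)) \<in> O[at 0](\<lambda>\<gamma>. \<gamma>)"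
    by (rule bigoI_tendsto) (rule ev_nz)
qed

theorem lemmaC3:
  fixes S1 S2 :: "'a set" and m :: "'a \<Rightarrow> nat" and z :: "'a \<Rightarrow> complex"
    and l :: "'a \<Rightarrow> nat \<Rightarrow> complex" and linf :: complex
    and M1 M :: nat and zeta0 :: "nat \<Rightarrow> complex"
    and zeta :: "nat \<Rightarrow> complex \<Rightarrow> complex"
  assumes linf: "linf \<noteq> 0"
    and fin: "finite S1" "finite S2" and disj: "S1 \<inter> S2 = {}"
    and m_pos: "\<And>\<alpha>. \<alpha> \<in> S1 \<union> S2 \<Longrightarrow> m \<alpha> \<ge> 1"
    and z_inj: "inj_on z S1" "inj_on z S2"
    and l_top: "\<And>\<alpha>. \<alpha> \<in> S1 \<union> S2 \<Longrightarrow> l \<alpha> (m \<alpha> - 1) \<noteq> 0"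
    and M1_def: "M1 = (\<Sum>\<alpha>\<in>S1. m \<alpha>)"
    and M_def: "M = M1 + (\<Sum>\<alpha>\<in>S2. m \<alpha>)"
    \<comment> \<open>zeta0 1..M1 are exactly the zeros of phi_1, all simple\<close>
    and zeros1: "inj_on zeta0 {1..M1}"
      "{w. w \<notin> z ` S1 \<and> phi S1 m z l linf w = 0} = zeta0 ` {1..M1}"
      "\<And>i. i \<in> {1..M1} \<Longrightarrow> deriv (phi S1 m z l linf) (zeta0 i) \<noteq> 0"
    \<comment> \<open>zeta0 (M1+1)..M are exactly the zeros of phi_2, all simple\<close>
    and zeros2: "inj_on zeta0 {M1<..M}"
      "{w. w \<notin> z ` S2 \<and> phi S2 m z l linf w = 0} = zeta0 ` {M1<..M}"
      "\<And>i. i \<in> {M1<..M} \<Longrightarrow> deriv (phi S2 m z l linf) (zeta0 i) \<noteq> 0"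
    \<comment> \<open>for small gamma, zeta i gamma (i = 1..M) are the zeros of phi_{1(x)2,gamma}\<close>
    and zeros12: "\<forall>\<^sub>F \<gamma> in at 0. inj_on (\<lambda>i. zeta i \<gamma>) {1..M} \<and>
        {w. w \<notin> poles12 S1 S2 z \<gamma> \<and> phi12 S1 S2 m z l linf \<gamma> w = 0}
          = (\<lambda>i. zeta i \<gamma>) ` {1..M}"
    \<comment> \<open>labelling of the zeros\<close>
    and lab1: "\<And>i. i \<in> {1..M1} \<Longrightarrow>
        (\<lambda>\<gamma>. zeta i \<gamma> - zeta0 i) \<in> O[at 0](\<lambda>\<gamma>. \<gamma>)"
    and lab2: "\<And>i. i \<in> {M1<..M} \<Longrightarrow>
        (\<lambda>\<gamma>. zeta i \<gamma> - inverse \<gamma> - zeta0 i) \<in> O[at 0](\<lambda>\<gamma>. \<gamma>)"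
  shows "(\<forall>i\<in>{1..M1}. (\<lambda>\<gamma>. deriv (phi12 S1 S2 m z l linf \<gamma>) (zeta i \<gamma>)
              - deriv (phi S1 m z l linf) (zeta0 i)) \<in> O[at 0](\<lambda>\<gamma>. \<gamma>))
       \<and> (\<forall>i\<in>{M1<..M}. (\<lambda>\<gamma>. deriv (phi12 S1 S2 m z l linf \<gamma>) (zeta i \<gamma>)
              - deriv (phi S2 m z l linf) (zeta0 i)) \<in> O[at 0](\<lambda>\<gamma>. \<gamma>))"
proof (intro conjI ballI)
  fix i assume i: "i \<in> {1..M1}"
  let ?g = "zeta i"
  have w0: "zeta0 i \<notin> z ` S1" using zeros1(2) i by blast
  note nb = near_bound(1)[OF fin(1) w0 lab1[OF i]] near_bound(2)[OF fin(1) w0 lab1[OF i], where m=m and l=l]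
  have gt: "(?g \<longlongrightarrow> zeta0 i) (at 0)"
    using tendsto_add[OF bigo_tendsto0[OF lab1[OF i]] tendsto_const[of "zeta0 i"]] by simp
  have "((\<lambda>\<gamma>. \<gamma> * ?g \<gamma> - 1) \<longlongrightarrow> -1) (at 0)"
    using tendsto_diff[OF tendsto_mult[OF tendsto_ident_at gt] tendsto_const[of 1]] by simp
  then have lim: "((\<lambda>\<gamma>. \<gamma> * (?g \<gamma> - inverse \<gamma>)) \<longlongrightarrow> -1) (at 0)"
    by (rule Lim_transform_eventually[OF _ eventually_mono[OF ev_nz]]) (auto simp: algebra_simps)
  have c1: "(-1::complex) \<noteq> 0" by simp
  note fb = far_bound(1)[OF fin(2) lim c1, where z=z] far_bound(2)[OF fin(2) lim c1, where z=z and m=m and l=l]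
  have ev: "eventually (\<lambda>\<gamma>. chid S1 m z l (?g \<gamma>) - chid S1 m z l (zeta0 i) + chid S2 m z l (?g \<gamma> - inverse \<gamma>)
     = deriv (phi12 S1 S2 m z l linf \<gamma>) (zeta i \<gamma>) - deriv (phi S1 m z l linf) (zeta0 i)) (at 0)"
    using nb(1) fb(1)
    by eventually_elim (simp add: deriv_phi12[OF fin] deriv_phi[OF fin(1) w0])
  show "(\<lambda>\<gamma>. deriv (phi12 S1 S2 m z l linf \<gamma>) (zeta i \<gamma>) - deriv (phi S1 m z l linf) (zeta0 i))
        \<in> O[at 0](\<lambda>\<gamma>. \<gamma>)"
    using sum_in_bigo(1)[OF nb(2) fb(2)] landau_o.big.in_cong[OF ev] by simp
next
  fix i assume i: "i \<in> {M1<..M}"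
  let ?g = "\<lambda>\<gamma>. zeta i \<gamma> - inverse \<gamma>"
  have w0: "zeta0 i \<notin> z ` S2" using zeros2(2) i by blast
  note nb = near_bound(1)[OF fin(2) w0 lab2[OF i]] near_bound(2)[OF fin(2) w0 lab2[OF i], where m=m and l=l]
  have gt: "(?g \<longlongrightarrow> zeta0 i) (at 0)"
    using tendsto_add[OF bigo_tendsto0[OF lab2[OF i]] tendsto_const[of "zeta0 i"]] by simp
  have "((\<lambda>\<gamma>. \<gamma> * ?g \<gamma> + 1) \<longlongrightarrow> 1) (at 0)"
    using tendsto_add[OF tendsto_mult[OF tendsto_ident_at gt] tendsto_const[of 1]] by simp
  then have lim: "((\<lambda>\<gamma>. \<gamma> * zeta i \<gamma>) \<longlongrightarrow> 1) (at 0)"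
    by (rule Lim_transform_eventually[OF _ eventually_mono[OF ev_nz]]) (auto simp: algebra_simps)
  have c1: "(1::complex) \<noteq> 0" by simp
  note fb = far_bound(1)[OF fin(1) lim c1, where z=z] far_bound(2)[OF fin(1) lim c1, where z=z and m=m and l=l]
  have ev: "eventually (\<lambda>\<gamma>. chid S2 m z l (?g \<gamma>) - chid S2 m z l (zeta0 i) + chid S1 m z l (zeta i \<gamma>)
     = deriv (phi12 S1 S2 m z l linf \<gamma>) (zeta i \<gamma>) - deriv (phi S2 m z l linf) (zeta0 i)) (at 0)"
    using nb(1) fb(1)
    by eventually_elim (simp add: deriv_phi12[OF fin] deriv_phi[OF fin(2) w0])
  show "(\<lambda>\<gamma>. deriv (phi12 S1 S2 m z l linf \<gamma>) (zeta i \<gamma>) - deriv (phi S2 m z l linf) (zeta0 i))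
        \<in> O[at 0](\<lambda>\<gamma>. \<gamma>)"
    using sum_in_bigo(1)[OF nb(2) fb(2)] landau_o.big.in_cong[OF ev] by simp
qed

end
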